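(* Let $H[A,B]$ be a connected bipartite cubic graph with a $2$-cut $C$, and let $H_1,H_2$ be its marked $C$-components. For $a\in A$ and $b\in B$, the pair $(a,b)$ is $\lambda$-matchable in $H$ if and only if $a$ and $b$ lie in the same component of $H-C$ and $(a,b)$ is $\lambda$-matchable in the corresponding marked $C$-component. Consequently, $\rho(H)=\rho(H_1)+\rho(H_2)$.
   Context: Graphs are loopless but may have parallel edges. A $2$-cut is a cut (set of edges with exactly one end in a vertex set $X$) with two edges. For a $2$-cut $C$ of a $2$-connected cubic graph, $G-C$ has two components; adding to each an edge (the marker edge) joining its two vertices of degree two gives the two marked $C$-components. For a connected bipartite cubic graph, $a\in A$, $b\in B$, an $(a,b)$-matching is a spanning subgraph with $a,b$ of degree $3$ and every other vertex of degree $1$; $(a,b)$ is $\lambda$-matchable if one exists; $\rho$ counts such pairs. *)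

theory Defs
  imports Main
begin

text \<open>Multigraphs (parallel edges allowed, no loops): vertex set V, edge set E of edge
  identifiers, and an endpoint map ends assigning each edge a 2-element set of vertices.\<close>

definition mgraph :: "'v set \<Rightarrow> 'e set \<Rightarrow> ('e \<Rightarrow> 'v set) \<Rightarrow> bool" where
  "mgraph V E ends \<longleftrightarrow> finite V \<and> finite E \<and> (\<forall>e\<in>E. ends e \<subseteq> V \<and> card (ends e) = 2)"

definition deg :: "'e set \<Rightarrow> ('e \<Rightarrow> 'v set) \<Rightarrow> 'v \<Rightarrow> nat" where
  "deg F ends v = card {e\<in>F. v \<in> ends e}"

definition cubic :: "'v set \<Rightarrow> 'e set \<Rightarrow> ('e \<Rightarrow> 'v set) \<Rightarrow> bool" where
  "cubic V E ends \<longleftrightarrow> (\<forall>v\<in>V. deg E ends v = 3)"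

definition adj_rel :: "'e set \<Rightarrow> ('e \<Rightarrow> 'v set) \<Rightarrow> ('v \<times> 'v) set" where
  "adj_rel F ends = {(u, w). \<exists>e\<in>F. ends e = {u, w}}"

definition connected_mg :: "'v set \<Rightarrow> 'e set \<Rightarrow> ('e \<Rightarrow> 'v set) \<Rightarrow> bool" where
  "connected_mg V E ends \<longleftrightarrow> (\<forall>u\<in>V. \<forall>w\<in>V. (u, w) \<in> (adj_rel E ends)\<^sup>*)"

definition bipartite_AB :: "'v set \<Rightarrow> 'e set \<Rightarrow> ('e \<Rightarrow> 'v set) \<Rightarrow> 'v set \<Rightarrow> 'v set \<Rightarrow> bool" where
  "bipartite_AB V E ends A B \<longleftrightarrow> A \<union> B = V \<and> A \<inter> B = {} \<and>
     (\<forall>e\<in>E. card (ends e \<inter> A) = 1 \<and> card (ends e \<inter> B) = 1)"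

definition cut :: "'e set \<Rightarrow> ('e \<Rightarrow> 'v set) \<Rightarrow> 'v set \<Rightarrow> 'e set" where
  "cut E ends X = {e\<in>E. card (ends e \<inter> X) = 1}"

definition two_cut :: "'v set \<Rightarrow> 'e set \<Rightarrow> ('e \<Rightarrow> 'v set) \<Rightarrow> 'e set \<Rightarrow> bool" where
  "two_cut V E ends C \<longleftrightarrow> card C = 2 \<and> (\<exists>X\<subseteq>V. C = cut E ends X)"

definition comp_of :: "'v set \<Rightarrow> 'e set \<Rightarrow> ('e \<Rightarrow> 'v set) \<Rightarrow> 'e set \<Rightarrow> 'v \<Rightarrow> 'v set" where
  "comp_of V E ends C v = {w\<in>V. (v, w) \<in> (adj_rel (E - C) ends)\<^sup>*}"

text \<open>Marked C-component on vertex set K (a component of G - C): the edges of G - C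
  inside K (tagged Some) plus a marker edge None joining the two vertices of degree two.\<close>
definition mk_edges :: "'e set \<Rightarrow> ('e \<Rightarrow> 'v set) \<Rightarrow> 'e set \<Rightarrow> 'v set \<Rightarrow> 'e option set" where
  "mk_edges E ends C K = Some ` {e\<in>E - C. ends e \<subseteq> K} \<union> {None}"

definition mk_ends :: "'e set \<Rightarrow> ('e \<Rightarrow> 'v set) \<Rightarrow> 'e set \<Rightarrow> 'v set \<Rightarrow> 'e option \<Rightarrow> 'v set" where
  "mk_ends E ends C K x = (case x of Some e \<Rightarrow> ends e
      | None \<Rightarrow> {v\<in>K. deg (E - C) ends v = 2})"

definition ab_matching :: "'v set \<Rightarrow> 'e set \<Rightarrow> ('e \<Rightarrow> 'v set) \<Rightarrow> 'v \<Rightarrow> 'v \<Rightarrow> 'e set \<Rightarrow> bool" where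
  "ab_matching V E ends a b F \<longleftrightarrow> F \<subseteq> E \<and> deg F ends a = 3 \<and> deg F ends b = 3 \<and>
     (\<forall>v\<in>V - {a, b}. deg F ends v = 1)"

definition lam_matchable :: "'v set \<Rightarrow> 'e set \<Rightarrow> ('e \<Rightarrow> 'v set) \<Rightarrow> 'v \<Rightarrow> 'v \<Rightarrow> bool" where
  "lam_matchable V E ends a b \<longleftrightarrow> (\<exists>F. ab_matching V E ends a b F)"

definition rho :: "'v set \<Rightarrow> 'e set \<Rightarrow> ('e \<Rightarrow> 'v set) \<Rightarrow> 'v set \<Rightarrow> 'v set \<Rightarrow> nat" where
  "rho V E ends A B = card {(a, b). a \<in> A \<and> b \<in> B \<and> lam_matchable V E ends a b}"

end

theory Submission
  imports Defs
begin

lemma card_filter_sum: "finite F \<Longrightarrow> card {e\<in>F. P e} = (\<Sum>e\<in>F. if P e then 1 else 0)"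
  by (simp add: sum.If_cases Int_def)

lemma deg_sum:
  assumes "finite F" "finite T"
  shows "(\<Sum>v\<in>T. deg F ends v) = (\<Sum>e\<in>F. card (ends e \<inter> T))"
proof -
  have "(\<Sum>v\<in>T. deg F ends v) = (\<Sum>v\<in>T. \<Sum>e\<in>F. if v \<in> ends e then 1 else 0)"
    using assms by (simp add: deg_def card_filter_sum)
  also have "\<dots> = (\<Sum>e\<in>F. \<Sum>v\<in>T. if v\<in>ends e then 1 else 0)" by (rule sum.swap)
  also have "\<dots> = (\<Sum>e\<in>F. card (ends e \<inter> T))"
  proof (rule sum.cong[OF refl])
    fix e
    have "card (ends e \<inter> T) = card {v\<in>T. v \<in> ends e}" by (metis Collect_conj_eq Int_commute Collect_mem_eq inf_set_def)
    also have "\<dots> = (\<Sum>v\<in>T. if v\<in>ends e then 1 else 0)" using assms(2) by (simp add: card_filter_sum)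
    finally show "(\<Sum>v\<in>T. if v\<in>ends e then 1 else 0) = card (ends e \<inter> T)" by simp
  qed
  finally show ?thesis .
qed

lemma hall:
  fixes S :: "'i \<Rightarrow> 'a set"
  assumes "finite I" "\<forall>i\<in>I. finite (S i)" "\<forall>J\<subseteq>I. card J \<le> card (\<Union>(S ` J))"
  shows "\<exists>f. inj_on f I \<and> (\<forall>i\<in>I. f i \<in> S i)"
  using assms
proof (induction "card I" arbitrary: I S rule: less_induct)
  case less
  show ?case
  proof (cases "I = {}")
    case True then show ?thesis by auto
  next
    case False
    show ?thesis
    proof (cases "\<exists>J\<subseteq>I. J \<noteq> {} \<and> J \<noteq> I \<and> card (\<Union>(S`J)) \<le> card J")
      case True
      then obtain J where J: "J \<subseteq> I" "J \<noteq> {}" "J \<noteq> I" "card (\<Union>(S`J)) \<le> card J" by blast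
      have fJ: "finite J" using J(1) less.prems(1) finite_subset by blast
      have cJ: "card J < card I" using J(1,3) less.prems(1) by (meson psubsetI psubset_card_mono)
      obtain f1 where f1: "inj_on f1 J" "\<forall>i\<in>J. f1 i \<in> S i"
      proof -
        have "\<forall>i\<in>J. finite (S i)" using less.prems(2) J(1) by blast
        moreover have "\<forall>K\<subseteq>J. card K \<le> card (\<Union>(S ` K))" using less.prems(3) J(1) by blast
        ultimately show ?thesis using less.hyps[OF cJ fJ] that by blast
      qed
      define U where "U = \<Union>(S`J)"
      define S2 where "S2 = (\<lambda>i. S i - U)"
      have fIJ: "finite (I - J)" using less.prems(1) by simp
      have cIJ: "card (I-J) < card I"
      proof -
        have "card J > 0" using fJ J(2) by auto
        moreover have "card J \<le> card I" using J(1) less.prems(1) by (simp add: card_mono)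
        ultimately show ?thesis using J(1) fJ by (simp add: card_Diff_subset)
      qed
      have hall2: "\<forall>T\<subseteq>I-J. card T \<le> card (\<Union>(S2`T))"
      proof (intro allI impI)
        fix T assume T: "T \<subseteq> I - J"
        have fT: "finite T" using T fIJ finite_subset by blast
        have "card T + card J = card (T \<union> J)" 
        proof -
          have "T \<inter> J = {}" using T by blast
          then show ?thesis using fT fJ by (simp add: card_Un_disjoint)
        qed
        also have "\<dots> \<le> card (\<Union>(S`(T\<union>J)))" 
          by (rule less.prems(3)[rule_format]) (use T J(1) in blast)
        also have "\<Union>(S`(T\<union>J)) = \<Union>(S2`T) \<union> U" by (auto simp: S2_def U_def)
        also have "card (\<Union>(S2`T) \<union> U) \<le> card (\<Union>(S2`T)) + card U" by (rule card_Un_le)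
        finally show "card T \<le> card (\<Union>(S2`T))" using J(4) U_def by simp
      qed
      have fS2: "\<forall>i\<in>I-J. finite (S2 i)" using less.prems(2) by (simp add: S2_def)
      obtain f2 where f2: "inj_on f2 (I-J)" "\<forall>i\<in>I-J. f2 i \<in> S2 i"
        using less.hyps[OF cIJ fIJ fS2 hall2] by blast
      define f where "f = (\<lambda>i. if i \<in> J then f1 i else f2 i)"
      have "inj_on f I"
      proof (rule inj_onI)
        fix i j assume ij: "i \<in> I" "j \<in> I" "f i = f j"
        show "i = j"
        proof (cases "i \<in> J"; cases "j \<in> J")
          assume "i \<in> J" "j \<in> J" then show ?thesis using ij f1(1) by (simp add: f_def inj_on_def)
        next
          assume a: "i \<in> J" "j \<notin> J"
          then have "f1 i \<in> U" using f1(2) U_def by auto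
          moreover have "f2 j \<notin> U" using f2(2) a ij S2_def by auto
          ultimately show ?thesis using ij a by (simp add: f_def)
        next
          assume a: "i \<notin> J" "j \<in> J"
          then have "f1 j \<in> U" using f1(2) U_def by auto
          moreover have "f2 i \<notin> U" using f2(2) a ij S2_def by auto
          ultimately show ?thesis using ij a by (simp add: f_def)
        next
          assume "i \<notin> J" "j \<notin> J" then show ?thesis using ij f2(1) by (simp add: f_def inj_on_def)
        qed
      qed
      moreover have "\<forall>i\<in>I. f i \<in> S i" using f1(2) f2(2) by (auto simp: f_def S2_def)
      ultimately show ?thesis by blast
    next
      case False2: False
      obtain i where i: "i \<in> I" using \<open>I \<noteq> {}\<close> by blast
      have "card {i} \<le> card (S i)" using less.prems(3)[rule_format, of "{i}"] i by simp
      then have "S i \<noteq> {}" by auto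
      then obtain x where x: "x \<in> S i" by blast
      define S2 where "S2 = (\<lambda>j. S j - {x})"
      have fI1: "finite (I - {i})" using less.prems(1) by simp
      have cI1: "card (I - {i}) < card I" by (rule card_Diff1_less[OF less.prems(1) i])
      have hall2: "\<forall>T\<subseteq>I-{i}. card T \<le> card (\<Union>(S2`T))"
      proof (intro allI impI)
        fix T assume T: "T \<subseteq> I - {i}"
        show "card T \<le> card (\<Union>(S2`T))"
        proof (cases "T = {}")
          case True then show ?thesis by simp
        next
          case False
          have fT: "finite T" using T fI1 finite_subset by blast
          have fU: "finite (\<Union>(S`T))" using fT less.prems(2) T by auto
          have "T \<noteq> I" using T i by auto
          moreover have "T \<subseteq> I" using T by blast
          ultimately have "card T < card (\<Union>(S`T))" using False2 False not_le by blast
          moreover have "\<Union>(S2`T) = \<Union>(S`T) - {x}" by (auto simp: S2_def)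
          moreover have "card (\<Union>(S`T) - {x}) \<ge> card (\<Union>(S`T)) - 1" using fU by (simp add: card_Diff_singleton_if)
          ultimately show ?thesis by simp
        qed
      qed
      have fS2: "\<forall>j\<in>I-{i}. finite (S2 j)" using less.prems(2) by (simp add: S2_def)
      obtain f2 where f2: "inj_on f2 (I-{i})" "\<forall>j\<in>I-{i}. f2 j \<in> S2 j"
        using less.hyps[OF cI1 fI1 fS2 hall2] by blast
      define f where "f = f2(i := x)"
      have "inj_on f I"
      proof (rule inj_onI)
        fix j k assume jk: "j \<in> I" "k \<in> I" "f j = f k"
        show "j = k"
          using jk f2 unfolding f_def S2_def inj_on_def
        proof (cases "j = i"; cases "k = i")
          assume "j \<noteq> i" "k \<noteq> i" then show ?thesis using jk f2(1) by (simp add: f_def inj_on_def)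
        next
          assume "j = i" "k \<noteq> i" then show ?thesis using jk f2(2) by (auto simp: f_def S2_def)
        next
          assume "j \<noteq> i" "k = i" then show ?thesis using jk f2(2) by (auto simp: f_def S2_def)
        qed simp
      qed
      moreover have "\<forall>j\<in>I. f j \<in> S j" using f2(2) x by (auto simp: f_def S2_def)
      ultimately show ?thesis by blast
    qed
  qed
qed


lemma hall_pm:
  fixes ends :: "'e \<Rightarrow> 'v set"
  assumes fin: "finite L" "finite R" "finite E'" and disj: "L \<inter> R = {}"
    and ed: "\<forall>e\<in>E'. \<exists>u\<in>L. \<exists>w\<in>R. ends e = {u,w}"
    and dg: "\<forall>w\<in>R. deg E' ends w \<le> 3"
    and cLR: "card L = card R"
    and hs: "\<forall>S\<subseteq>L. 3 * card S \<le> card {e\<in>E'. ends e \<inter> S \<noteq> {}} + 2"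
  shows "\<exists>M\<subseteq>E'. \<forall>v\<in>L\<union>R. deg M ends v = 1"
proof -
  define N where "N u = {w\<in>R. \<exists>e\<in>E'. ends e = {u,w}}" for u
  have hallc: "\<forall>S\<subseteq>L. card S \<le> card (\<Union>(N`S))"
  proof (intro allI impI)
    fix S assume S: "S \<subseteq> L"
    let ?ES = "{e\<in>E'. ends e \<inter> S \<noteq> {}}"
    have sub: "?ES \<subseteq> (\<Union>w\<in>\<Union>(N`S). {e\<in>E'. w \<in> ends e})"
    proof
      fix e assume e: "e \<in> ?ES"
      then obtain u w where uw: "u\<in>L" "w\<in>R" "ends e = {u,w}" using ed by blast
      have "u \<in> S" using e uw S disj by auto
      then have "w \<in> \<Union>(N`S)" using uw e by (auto simp: N_def)
      then show "e \<in> (\<Union>w\<in>\<Union>(N`S). {e\<in>E'. w \<in> ends e})" using uw e by auto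
    qed
    have fN: "finite (\<Union>(N`S))"
      by (rule finite_subset[OF _ fin(2)]) (auto simp: N_def)
    have "card ?ES \<le> card (\<Union>w\<in>\<Union>(N`S). {e\<in>E'. w \<in> ends e})"
      by (rule card_mono[OF _ sub]) (rule finite_subset[OF _ fin(3)], blast)
    also have "\<dots> \<le> (\<Sum>w\<in>\<Union>(N`S). card {e\<in>E'. w\<in>ends e})"
      by (rule card_UN_le[OF fN])
    also have "\<dots> \<le> (\<Sum>w\<in>\<Union>(N`S). 3)"
    proof (rule sum_mono)
      fix w assume "w \<in> \<Union>(N`S)"
      then have "w \<in> R" by (auto simp: N_def)
      then show "card {e\<in>E'. w\<in>ends e} \<le> 3" using dg unfolding deg_def by blast
    qed
    also have "\<dots> = 3 * card (\<Union>(N`S))" by simp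
    finally have "card ?ES \<le> 3 * card (\<Union>(N`S))" .
    moreover have "3 * card S \<le> card ?ES + 2" using hs S by blast
    ultimately show "card S \<le> card (\<Union>(N`S))" by presburger
  qed
  have finN: "\<forall>u\<in>L. finite (N u)" using fin(2) by (auto simp: N_def)
  obtain f where f: "inj_on f L" "\<forall>u\<in>L. f u \<in> N u" using hall[OF fin(1) finN hallc] by blast
  define g where "g u = (SOME e. e\<in>E' \<and> ends e = {u, f u})" for u
  have g: "\<forall>u\<in>L. g u \<in> E' \<and> ends (g u) = {u, f u}"
  proof
    fix u assume "u \<in> L"
    then have "\<exists>e. e\<in>E' \<and> ends e = {u, f u}" using f(2) by (auto simp: N_def)
    then show "g u \<in> E' \<and> ends (g u) = {u, f u}" unfolding g_def by (rule someI_ex)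
  qed
  have fLR: "f ` L \<subseteq> R" using f(2) by (auto simp: N_def)
  have fR: "f ` L = R"
  proof (rule card_subset_eq[OF fin(2) fLR])
    show "card (f ` L) = card R" using card_image[OF f(1)] cLR by simp
  qed
  show ?thesis
  proof (intro exI[of _ "g`L"] conjI ballI)
    show "g`L \<subseteq> E'" using g by auto
    fix v assume v: "v \<in> L \<union> R"
    show "deg (g`L) ends v = 1"
    proof (cases "v\<in>L")
      case True
      have "{e\<in>g`L. v\<in>ends e} = {g v}"
      proof
        show "{e\<in>g`L. v\<in>ends e} \<subseteq> {g v}"
        proof
          fix e assume e: "e \<in> {e\<in>g`L. v\<in>ends e}"
          then obtain u where u: "u \<in> L" "e = g u" by auto
          then have "v \<in> {u, f u}" using e g by auto
          moreover have "f u \<in> R" using fLR u by auto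
          ultimately have "v = u" using True disj by auto
          then show "e \<in> {g v}" using u by simp
        qed
        show "{g v} \<subseteq> {e\<in>g`L. v\<in>ends e}" using True g by auto
      qed
      then show ?thesis by (simp add: deg_def)
    next
      case False
      then have "v \<in> R" using v by simp
      then obtain u0 where u0: "u0 \<in> L" "f u0 = v" using fR by blast
      have "{e\<in>g`L. v\<in>ends e} = {g u0}"
      proof
        show "{e\<in>g`L. v\<in>ends e} \<subseteq> {g u0}"
        proof
          fix e assume e: "e \<in> {e\<in>g`L. v\<in>ends e}"
          then obtain u where u: "u \<in> L" "e = g u" by auto
          then have "v \<in> {u, f u}" using e g by auto
          then have "f u = f u0" using False u u0 by auto
          then have "u = u0" using f(1) u u0 by (auto simp: inj_on_def)
          then show "e \<in> {g u0}" using u by simp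
        qed
        show "{g u0} \<subseteq> {e\<in>g`L. v\<in>ends e}" using u0 g by auto
      qed
      then show ?thesis by (simp add: deg_def)
    qed
  qed
qed


locale cg =
  fixes V :: "'v set" and E :: "'e set" and ends :: "'e \<Rightarrow> 'v set" and A B :: "'v set" and C :: "'e set"
  assumes mg: "mgraph V E ends" and conn: "connected_mg V E ends" and cub: "cubic V E ends"
    and bip: "bipartite_AB V E ends A B" and tc: "two_cut V E ends C"
begin

lemma finV: "finite V" and finE: "finite E" and ends_sub: "e\<in>E \<Longrightarrow> ends e \<subseteq> V"
  and card_ends: "e\<in>E \<Longrightarrow> card (ends e) = 2"
  using mg by (auto simp: mgraph_def)

lemma VAB: "V = A \<union> B" and AB: "A \<inter> B = {}"
  using bip by (auto simp: bipartite_AB_def)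

lemma finA: "finite A" and finB: "finite B" using finV VAB by auto

lemma deg3: "v\<in>V \<Longrightarrow> deg E ends v = 3" using cub by (simp add: cubic_def)

definition aend where "aend e = (SOME u. u \<in> ends e \<inter> A)"
definition bend where "bend e = (SOME u. u \<in> ends e \<inter> B)"

lemma ab_ends:
  assumes e: "e\<in>E"
  shows "ends e \<inter> A = {aend e}" "ends e \<inter> B = {bend e}" "ends e = {aend e, bend e}"
    "aend e \<in> A" "bend e \<in> B" "aend e \<noteq> bend e"
proof -
  have cA: "card (ends e \<inter> A) = 1" and cB: "card (ends e \<inter> B) = 1" using bip e by (auto simp: bipartite_AB_def)
  obtain x where x: "ends e \<inter> A = {x}" using cA by (rule card_1_singletonE)
  obtain y where y: "ends e \<inter> B = {y}" using cB by (rule card_1_singletonE)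
  have ax: "aend e = x" unfolding aend_def by (simp add: x)
  have bx: "bend e = y" unfolding bend_def by (simp add: y)
  have un: "ends e = (ends e \<inter> A) \<union> (ends e \<inter> B)" using ends_sub[OF e] VAB by blast
  show "ends e \<inter> A = {aend e}" by (simp add: x ax)
  show "ends e \<inter> B = {bend e}" by (simp add: y bx)
  show "ends e = {aend e, bend e}" using un x y ax bx by blast
  show "aend e \<in> A" using x ax by blast
  show "bend e \<in> B" using y bx by blast
  show "aend e \<noteq> bend e" using x y ax bx AB by blast
qed

lemma aend_V: "e \<in> E \<Longrightarrow> aend e \<in> V" and bend_V: "e \<in> E \<Longrightarrow> bend e \<in> V"
  using ab_ends VAB by auto

lemma mem_ends: "e \<in> E \<Longrightarrow> v \<in> ends e \<longleftrightarrow> v = aend e \<or> v = bend e"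
  using ab_ends(3) by auto

lemma cut_iff: "e \<in> E \<Longrightarrow> e \<in> cut E ends K \<longleftrightarrow> (aend e \<in> K \<longleftrightarrow> bend e \<notin> K)"
proof -
  assume e: "e \<in> E"
  have ne: "aend e \<noteq> bend e" using ab_ends[OF e] by simp
  have "ends e \<inter> K = (if aend e \<in> K then {aend e} else {}) \<union> (if bend e \<in> K then {bend e} else {})"
    using ab_ends(3)[OF e] by auto
  then show ?thesis using e ne by (auto simp: cut_def)
qed

lemma cut_sub: "cut E ends K \<subseteq> E" by (auto simp: cut_def)

lemma C_props: "C \<subseteq> E" "finite C" "card C = 2" "\<exists>X\<subseteq>V. C = cut E ends X"
proof -
  obtain X where X: "X \<subseteq> V" "C = cut E ends X" using tc by (auto simp: two_cut_def)
  then show "C \<subseteq> E" using cut_sub by simp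
  then show "finite C" using finE finite_subset by blast
  show "card C = 2" using tc by (simp add: two_cut_def)
  show "\<exists>X\<subseteq>V. C = cut E ends X" using X by blast
qed

lemma degA: assumes v: "v \<in> A" and F: "F \<subseteq> E" shows "{e\<in>F. v \<in> ends e} = {e\<in>F. aend e = v}"
proof (rule Collect_cong)
  fix e show "(e\<in>F \<and> v\<in>ends e) \<longleftrightarrow> (e\<in>F \<and> aend e = v)"
  proof (cases "e\<in>F")
    case True
    then have e: "e \<in> E" using F by blast
    have "bend e \<noteq> v" using ab_ends(5)[OF e] AB v by blast
    then show ?thesis using mem_ends[OF e, of v] True by auto
  qed simp
qed

lemma degB: assumes v: "v \<in> B" and F: "F \<subseteq> E" shows "{e\<in>F. v \<in> ends e} = {e\<in>F. bend e = v}"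
proof (rule Collect_cong)
  fix e show "(e\<in>F \<and> v\<in>ends e) \<longleftrightarrow> (e\<in>F \<and> bend e = v)"
  proof (cases "e\<in>F")
    case True
    then have e: "e \<in> E" using F by blast
    have "aend e \<noteq> v" using ab_ends(4)[OF e] AB v by blast
    then show ?thesis using mem_ends[OF e, of v] True by auto
  qed simp
qed

lemma sum_deg_A: assumes "F \<subseteq> E"
  shows "(\<Sum>v\<in>A\<inter>K. deg F ends v) = (\<Sum>e\<in>F. if aend e \<in> K then 1 else 0)"
proof -
  have fF: "finite F" using assms finE finite_subset by blast
  have "(\<Sum>v\<in>A\<inter>K. deg F ends v) = (\<Sum>e\<in>F. card (ends e \<inter> (A\<inter>K)))"
    by (rule deg_sum[OF fF]) (use finA in simp)
  also have "\<dots> = (\<Sum>e\<in>F. if aend e \<in> K then 1 else 0)"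
  proof (rule sum.cong[OF refl])
    fix e assume "e \<in> F"
    then have e: "e \<in> E" using assms by blast
    have "ends e \<inter> (A\<inter>K) = {aend e} \<inter> K" using ab_ends(1)[OF e] by blast
    then show "card (ends e \<inter> (A\<inter>K)) = (if aend e \<in> K then 1 else 0)" by auto
  qed
  finally show ?thesis .
qed

lemma sum_deg_B: assumes "F \<subseteq> E"
  shows "(\<Sum>v\<in>B\<inter>K. deg F ends v) = (\<Sum>e\<in>F. if bend e \<in> K then 1 else 0)"
proof -
  have fF: "finite F" using assms finE finite_subset by blast
  have "(\<Sum>v\<in>B\<inter>K. deg F ends v) = (\<Sum>e\<in>F. card (ends e \<inter> (B\<inter>K)))"
    by (rule deg_sum[OF fF]) (use finB in simp)
  also have "\<dots> = (\<Sum>e\<in>F. if bend e \<in> K then 1 else 0)"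
  proof (rule sum.cong[OF refl])
    fix e assume "e \<in> F"
    then have e: "e \<in> E" using assms by blast
    have "ends e \<inter> (B\<inter>K) = {bend e} \<inter> K" using ab_ends(2)[OF e] by blast
    then show "card (ends e \<inter> (B\<inter>K)) = (if bend e \<in> K then 1 else 0)" by auto
  qed
  finally show ?thesis .
qed

lemma parity:
  assumes F: "F \<subseteq> E"
  shows "int (\<Sum>v\<in>A\<inter>K. deg F ends v) - int (\<Sum>v\<in>B\<inter>K. deg F ends v)
       = (\<Sum>e\<in>F \<inter> cut E ends K. (if aend e \<in> K then 1 else 0) - (if bend e \<in> K then 1 else 0))"
proof -
  have fF: "finite F" using F finE finite_subset by blast
  define g :: "'e \<Rightarrow> int" where "g e = (if aend e \<in> K then 1 else 0) - (if bend e \<in> K then 1 else 0)" for e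
  have "int (\<Sum>v\<in>A\<inter>K. deg F ends v) - int (\<Sum>v\<in>B\<inter>K. deg F ends v)
      = (\<Sum>e\<in>F. (if aend e \<in> K then 1 else 0)) - (\<Sum>e\<in>F. (if bend e \<in> K then 1 else 0))"
    unfolding sum_deg_A[OF F] sum_deg_B[OF F] of_nat_sum by (intro arg_cong2[where f="(-)"] sum.cong) auto
  also have "\<dots> = (\<Sum>e\<in>F. g e)" by (simp add: g_def sum_subtractf)
  also have "\<dots> = (\<Sum>e\<in>F \<inter> cut E ends K. g e) + (\<Sum>e\<in>F - cut E ends K. g e)"
    by (rule sum.Int_Diff[OF fF])
  also have "(\<Sum>e\<in>F - cut E ends K. g e) = 0"
  proof (rule sum.neutral, rule ballI)
    fix e assume e: "e \<in> F - cut E ends K"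
    then have "e \<in> E" using F by blast
    then show "g e = 0" using e cut_iff[of e K] by (auto simp: g_def)
  qed
  finally show ?thesis by (simp add: g_def)
qed

lemma parityE:
  "3 * int (card (A\<inter>K)) - 3 * int (card (B\<inter>K))
       = (\<Sum>e\<in>cut E ends K. (if aend e \<in> K then 1 else 0) - (if bend e \<in> K then 1 else 0))"
proof -
  have "(\<Sum>v\<in>A\<inter>K. deg E ends v) = (\<Sum>v\<in>A\<inter>K. 3)" by (rule sum.cong[OF refl]) (use deg3 VAB in blast)
  moreover have "(\<Sum>v\<in>B\<inter>K. deg E ends v) = (\<Sum>v\<in>B\<inter>K. 3)" by (rule sum.cong[OF refl]) (use deg3 VAB in blast)
  moreover have "E \<inter> cut E ends K = cut E ends K" using cut_sub by blast
  ultimately show ?thesis using parity[of E K] by simp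
qed

lemma cut_term: "e \<in> cut E ends K \<Longrightarrow>
   ((if aend e \<in> K then 1 else 0) - (if bend e \<in> K then 1 else 0) :: int) = (if aend e \<in> K then 1 else -1)"
proof -
  assume h: "e \<in> cut E ends K"
  then have e: "e \<in> E" using cut_sub by blast
  have "aend e \<in> K \<longleftrightarrow> bend e \<notin> K" using cut_iff[OF e] h by simp
  then show ?thesis by auto
qed

lemma card_AB: "card A = card B"
proof -
  have "cut E ends V = {}"
  proof (rule ccontr)
    assume "cut E ends V \<noteq> {}"
    then obtain e where h: "e \<in> cut E ends V" by blast
    then have e: "e \<in> E" using cut_sub by blast
    show False using cut_iff[OF e, of V] h aend_V[OF e] bend_V[OF e] by simp
  qed
  then have "3 * int (card (A\<inter>V)) - 3 * int (card (B\<inter>V)) = 0" using parityE[of V] by simp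
  moreover have "A \<inter> V = A" "B \<inter> V = B" using VAB by auto
  ultimately show ?thesis by simp
qed

lemma connected_cut: assumes "Z \<subseteq> V" "Z \<noteq> {}" "V - Z \<noteq> {}" shows "cut E ends Z \<noteq> {}"
proof -
  obtain u w where uw: "u \<in> Z" "w \<in> V - Z" using assms by blast
  then have "(u, w) \<in> (adj_rel E ends)\<^sup>*" using conn assms(1) by (auto simp: connected_mg_def)
  have "\<And>z. (u, z) \<in> (adj_rel E ends)\<^sup>* \<Longrightarrow> z \<in> Z \<or> cut E ends Z \<noteq> {}"
  proof -
    fix z assume "(u, z) \<in> (adj_rel E ends)\<^sup>*"
    then show "z \<in> Z \<or> cut E ends Z \<noteq> {}"
    proof (induction rule: rtrancl_induct)
      case base then show ?case using uw by simp
    next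
      case (step y z)
      show ?case
      proof (cases "y \<in> Z \<and> z \<notin> Z")
        case True
        from step(2) obtain e where e: "e \<in> E" "ends e = {y, z}" by (auto simp: adj_rel_def)
        have "aend e \<in> Z \<longleftrightarrow> bend e \<notin> Z" using e True ab_ends(3)[OF e(1)] by (auto simp: doubleton_eq_iff)
        then have "e \<in> cut E ends Z" using cut_iff[OF e(1)] by simp
        then show ?thesis by blast
      next
        case False then show ?thesis using step(3) by blast
      qed
    qed
  qed
  then show ?thesis using \<open>(u, w) \<in> _\<close> uw by blast
qed


lemma rt_closed:
  assumes "(v,z) \<in> (adj_rel F ends)\<^sup>*" "F \<subseteq> E" "v \<in> S" "F \<inter> cut E ends S = {}"
  shows "z \<in> S"
  using assms(1)
proof (induction rule: rtrancl_induct)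
  case base show ?case using assms(3) .
next
  case (step y z)
  from step(2) obtain e where e: "e \<in> F" "ends e = {y, z}" by (auto simp: adj_rel_def)
  have eE: "e \<in> E" using e(1) assms(2) by blast
  have nc: "e \<notin> cut E ends S" using e(1) assms(4) by blast
  have yz: "y \<in> ends e" "z \<in> ends e" using e(2) by auto
  have "aend e \<in> S \<or> bend e \<in> S" using yz(1) step(3) mem_ends[OF eE, of y] by auto
  then have "aend e \<in> S \<and> bend e \<in> S" using nc cut_iff[OF eE, of S] by blast
  then show ?case using yz(2) mem_ends[OF eE, of z] by auto
qed

lemma adj_sym: "(u,w) \<in> (adj_rel F ends)\<^sup>* \<Longrightarrow> (w,u) \<in> (adj_rel F ends)\<^sup>*"
proof -
  assume h: "(u,w) \<in> (adj_rel F ends)\<^sup>*"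
  have "sym (adj_rel F ends)" unfolding sym_def adj_rel_def by (auto simp: insert_commute)
  then have "sym ((adj_rel F ends)\<^sup>*)" by (rule sym_rtrancl)
  then show ?thesis using h by (rule symD)
qed

lemma cut_compl: "cut E ends (V - X) = cut E ends X"
proof (rule set_eqI)
  fix e show "e \<in> cut E ends (V - X) \<longleftrightarrow> e \<in> cut E ends X"
  proof (cases "e \<in> E")
    case True
    then show ?thesis using cut_iff[OF True, of "V - X"] cut_iff[OF True, of X] aend_V[OF True] bend_V[OF True]
      by blast
  next
    case False then show ?thesis using cut_sub by blast
  qed
qed

lemma comp_props:
  assumes v: "v \<in> V"
  shows "comp_of V E ends C v \<subseteq> V" "v \<in> comp_of V E ends C v" "cut E ends (comp_of V E ends C v) = C"
proof -
  define K where "K = comp_of V E ends C v"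
  show KV: "comp_of V E ends C v \<subseteq> V" by (auto simp: comp_of_def)
  show vK: "v \<in> comp_of V E ends C v" using v by (simp add: comp_of_def)
  have KV': "K \<subseteq> V" and vK': "v \<in> K" using KV vK K_def by auto
  have sub: "cut E ends K \<subseteq> C"
  proof
    fix e assume eK: "e \<in> cut E ends K"
    then have e: "e \<in> E" using cut_sub by blast
    show "e \<in> C"
    proof (rule ccontr)
      assume nC: "e \<notin> C"
      have iff: "aend e \<in> K \<longleftrightarrow> bend e \<notin> K" using cut_iff[OF e] eK by simp
      have a1: "(aend e, bend e) \<in> adj_rel (E - C) ends" using e nC ab_ends(3)[OF e] by (auto simp: adj_rel_def)
      have a2: "(bend e, aend e) \<in> adj_rel (E - C) ends" using e nC ab_ends(3)[OF e] by (auto simp: adj_rel_def insert_commute)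
      show False
      proof (cases "aend e \<in> K")
        case True
        then have "(v, aend e) \<in> (adj_rel (E - C) ends)\<^sup>*" by (simp add: K_def comp_of_def)
        then have "(v, bend e) \<in> (adj_rel (E - C) ends)\<^sup>*" using a1 by (rule rtrancl_into_rtrancl)
        then have "bend e \<in> K" using bend_V[OF e] by (simp add: K_def comp_of_def)
        then show False using iff True by blast
      next
        case False
        then have "bend e \<in> K" using iff by blast
        then have "(v, bend e) \<in> (adj_rel (E - C) ends)\<^sup>*" by (simp add: K_def comp_of_def)
        then have "(v, aend e) \<in> (adj_rel (E - C) ends)\<^sup>*" using a2 by (rule rtrancl_into_rtrancl)
        then have "aend e \<in> K" using aend_V[OF e] by (simp add: K_def comp_of_def)
        then show False using False by blast
      qed
    qed
  qed
  obtain X0 where X0: "X0 \<subseteq> V" "C = cut E ends X0" using C_props(4) by blast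
  have "C \<noteq> {}" using C_props(3) by auto
  then obtain c where c: "c \<in> C" by blast
  have cE: "c \<in> E" using c C_props(1) by blast
  have "aend c \<in> X0 \<longleftrightarrow> bend c \<notin> X0" using cut_iff[OF cE] c X0(2) by simp
  then obtain x y where xy: "x \<in> X0" "y \<in> V - X0" using aend_V[OF cE] bend_V[OF cE] by blast
  have EC: "E - C \<subseteq> E" by blast
  have n1: "(E - C) \<inter> cut E ends X0 = {}" using X0(2) by blast
  have n2: "(E - C) \<inter> cut E ends (V - X0) = {}" using X0(2) cut_compl by blast
  have nV: "V - K \<noteq> {}"
  proof (cases "v \<in> X0")
    case True
    have "K \<subseteq> X0"
    proof
      fix z assume "z \<in> K"
      then have "(v, z) \<in> (adj_rel (E - C) ends)\<^sup>*" by (simp add: K_def comp_of_def)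
      then show "z \<in> X0" using rt_closed[OF _ EC True n1] by blast
    qed
    then show ?thesis using xy(2) by blast
  next
    case False
    then have vX: "v \<in> V - X0" using v by blast
    have "K \<subseteq> V - X0"
    proof
      fix z assume "z \<in> K"
      then have "(v, z) \<in> (adj_rel (E - C) ends)\<^sup>*" by (simp add: K_def comp_of_def)
      then show "z \<in> V - X0" using rt_closed[OF _ EC vX n2] by blast
    qed
    then show ?thesis using xy(1) X0(1) by blast
  qed
  have ne: "cut E ends K \<noteq> {}" using connected_cut[OF KV'] vK' nV by blast
  have fc: "finite (cut E ends K)" using sub C_props(2) finite_subset by blast
  have n1: "card (cut E ends K) \<noteq> 1"
  proof
    assume "card (cut E ends K) = 1"
    then obtain c where c: "cut E ends K = {c}" by (rule card_1_singletonE)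
    have "3 * int (card (A\<inter>K)) - 3 * int (card (B\<inter>K))
       = (\<Sum>e\<in>cut E ends K. (if aend e \<in> K then 1 else 0) - (if bend e \<in> K then 1 else 0))"
      by (rule parityE)
    also have "\<dots> = (if aend c \<in> K then 1 else -1)" using c cut_term[of c K] by simp
    finally have h: "3 * int (card (A\<inter>K)) - 3 * int (card (B\<inter>K)) = (if aend c \<in> K then 1 else -1)" .
    show False
    proof (cases "aend c \<in> K")
      case True
      then have "3 * int (card (A\<inter>K)) - 3 * int (card (B\<inter>K)) = 1" using h by simp
      then show False by presburger
    next
      case False
      then have "3 * int (card (A\<inter>K)) - 3 * int (card (B\<inter>K)) = -1" using h by simp
      then show False by presburger
    qed
  qed
  have "card (cut E ends K) \<le> 2" using card_mono[OF C_props(2) sub] C_props(3) by simp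
  moreover have "card (cut E ends K) \<noteq> 0" using ne fc by simp
  ultimately have "card (cut E ends K) = card C" using n1 C_props(3) by linarith
  then have "cut E ends K = C" using card_subset_eq[OF C_props(2) sub] by simp
  then show "cut E ends (comp_of V E ends C v) = C" by (simp add: K_def)
qed

lemma orient:
  assumes K: "cut E ends K = C"
  shows "\<exists>c1 c2. C = {c1,c2} \<and> c1 \<noteq> c2 \<and> aend c1 \<in> K \<and> bend c1 \<notin> K \<and> aend c2 \<notin> K \<and> bend c2 \<in> K"
    "card (A\<inter>K) = card (B\<inter>K)"
proof -
  obtain x y where xy: "C = {x,y}" "x \<noteq> y" using C_props(3) unfolding card_2_iff by blast
  have xE: "x \<in> E" and yE: "y \<in> E" using xy C_props(1) by auto
  have xc: "x \<in> cut E ends K" and yc: "y \<in> cut E ends K" using K xy by auto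
  have cK: "cut E ends K = {x,y}" using K xy(1) by simp
  define g :: "'e \<Rightarrow> int" where "g e = (if aend e \<in> K then 1 else 0) - (if bend e \<in> K then 1 else 0)" for e
  have "3 * int (card (A\<inter>K)) - 3 * int (card (B\<inter>K)) = (\<Sum>e\<in>cut E ends K. g e)"
    unfolding g_def by (rule parityE)
  also have "\<dots> = g x + g y" using xy(2) cK by simp
  finally have eq: "3 * int (card (A\<inter>K)) - 3 * int (card (B\<inter>K)) = g x + g y" .
  have gx: "g x = (if aend x \<in> K then 1 else -1)" unfolding g_def by (rule cut_term[OF xc])
  have gy: "g y = (if aend y \<in> K then 1 else -1)" unfolding g_def by (rule cut_term[OF yc])
  have ix: "aend x \<in> K \<longleftrightarrow> bend x \<notin> K" using cut_iff[OF xE] xc by simp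
  have iy: "aend y \<in> K \<longleftrightarrow> bend y \<notin> K" using cut_iff[OF yE] yc by simp
  have mix: "(aend x \<in> K \<and> aend y \<notin> K) \<or> (aend x \<notin> K \<and> aend y \<in> K)"
  proof (cases "aend x \<in> K"; cases "aend y \<in> K")
    assume "aend x \<in> K" "aend y \<in> K"
    then have "3 * int (card (A\<inter>K)) - 3 * int (card (B\<inter>K)) = 2" using eq gx gy by simp
    then have False by presburger
    then show ?thesis ..
  next
    assume "aend x \<notin> K" "aend y \<notin> K"
    then have "3 * int (card (A\<inter>K)) - 3 * int (card (B\<inter>K)) = -2" using eq gx gy by simp
    then have False by presburger
    then show ?thesis ..
  next
    assume "aend x \<in> K" "aend y \<notin> K" then show ?thesis by blast
  next
    assume "aend x \<notin> K" "aend y \<in> K" then show ?thesis by blast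
  qed
  have "g x + g y = 0" using mix gx gy by (elim disjE) simp_all
  then show "card (A\<inter>K) = card (B\<inter>K)" using eq by simp
  from mix show "\<exists>c1 c2. C = {c1,c2} \<and> c1 \<noteq> c2 \<and> aend c1 \<in> K \<and> bend c1 \<notin> K \<and> aend c2 \<notin> K \<and> bend c2 \<in> K"
  proof
    assume h: "aend x \<in> K \<and> aend y \<notin> K"
    show ?thesis
      apply (rule exI[of _ x], rule exI[of _ y], intro conjI)
      using xy ix iy h by simp_all
  next
    assume h: "aend x \<notin> K \<and> aend y \<in> K"
    have Cyx: "C = {y, x}" using xy(1) by blast
    show ?thesis
      apply (rule exI[of _ y], rule exI[of _ x], intro conjI)
      using Cyx xy ix iy h by simp_all
  qed
qed

end


locale side = cg V E ends A B C
  for V :: "'v set" and E :: "'e set" and ends :: "'e \<Rightarrow> 'v set" and A B :: "'v set" and C :: "'e set" +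
  fixes K :: "'v set" and c1 c2 :: 'e
  assumes KV: "K \<subseteq> V" and cutK: "cut E ends K = C" and Cc: "C = {c1,c2}" and c12: "c1 \<noteq> c2"
    and p1K: "aend c1 \<in> K" and q1K: "bend c1 \<notin> K" and q2K: "aend c2 \<notin> K" and p2K: "bend c2 \<in> K"
begin

lemma c1E: "c1 \<in> E" and c2E: "c2 \<in> E" using Cc C_props(1) by auto

lemma cAB_K: "card (A\<inter>K) = card (B\<inter>K)" using orient(2)[OF cutK] .

lemma cAB_Y: "card (A - K) = card (B - K)"
proof -
  have "card (A - K) = card A - card (A \<inter> K)" using finA by (simp add: card_Diff_subset_Int)
  moreover have "card (B - K) = card B - card (B \<inter> K)" using finB by (simp add: card_Diff_subset_Int)
  ultimately show ?thesis using cAB_K card_AB by simp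
qed

lemma edge_in: "e \<in> E \<Longrightarrow> e \<notin> C \<Longrightarrow> (aend e \<in> K \<longleftrightarrow> bend e \<in> K)"
  using cut_iff[of e K] cutK by blast

lemma p12: "aend c1 \<noteq> bend c2"
proof
  assume eq: "aend c1 = bend c2"
  have "aend c1 \<in> A" using ab_ends(4)[OF c1E] .
  moreover have "aend c1 \<in> B" using ab_ends(5)[OF c2E] eq by simp
  ultimately show False using AB by blast
qed

lemma q12: "bend c1 \<noteq> aend c2"
proof
  assume eq: "bend c1 = aend c2"
  have "bend c1 \<in> B" using ab_ends(5)[OF c1E] .
  moreover have "bend c1 \<in> A" using ab_ends(4)[OF c2E] eq by simp
  ultimately show False using AB by blast
qed

lemma inK_c1: assumes "v \<in> K" shows "v \<in> ends c1 \<longleftrightarrow> v = aend c1"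
proof -
  have "v \<noteq> bend c1" using q1K assms by blast
  then show ?thesis using mem_ends[OF c1E, of v] by simp
qed
lemma inK_c2: assumes "v \<in> K" shows "v \<in> ends c2 \<longleftrightarrow> v = bend c2"
proof -
  have "v \<noteq> aend c2" using q2K assms by blast
  then show ?thesis using mem_ends[OF c2E, of v] by simp
qed
lemma outK_c1: assumes "v \<notin> K" shows "v \<in> ends c1 \<longleftrightarrow> v = bend c1"
proof -
  have "v \<noteq> aend c1" using p1K assms by blast
  then show ?thesis using mem_ends[OF c1E, of v] by simp
qed
lemma outK_c2: assumes "v \<notin> K" shows "v \<in> ends c2 \<longleftrightarrow> v = aend c2"
proof -
  have "v \<noteq> bend c2" using p2K assms by blast
  then show ?thesis using mem_ends[OF c2E, of v] by simp
qed

lemma cntC_K: assumes "v \<in> K"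
  shows "card {c\<in>C. v \<in> ends c} = (if v = aend c1 \<or> v = bend c2 then 1 else 0)"
proof -
  have "{c\<in>C. v \<in> ends c} = (if v = aend c1 then {c1} else {}) \<union> (if v = bend c2 then {c2} else {})"
    using Cc inK_c1[OF assms] inK_c2[OF assms] by auto
  then show ?thesis using p12 c12 by auto
qed

lemma cntC_Y: assumes "v \<notin> K"
  shows "card {c\<in>C. v \<in> ends c} = (if v = bend c1 \<or> v = aend c2 then 1 else 0)"
proof -
  have "{c\<in>C. v \<in> ends c} = (if v = bend c1 then {c1} else {}) \<union> (if v = aend c2 then {c2} else {})"
    using Cc outK_c1[OF assms] outK_c2[OF assms] by auto
  then show ?thesis using q12 c12 by auto
qed

lemma degEC: assumes v: "v \<in> V" shows "deg (E - C) ends v = 3 - card {c\<in>C. v \<in> ends c}"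
proof -
  have "{e\<in>E - C. v \<in> ends e} = {e\<in>E. v \<in> ends e} - {c\<in>C. v \<in> ends c}" by blast
  moreover have "{c\<in>C. v \<in> ends c} \<subseteq> {e\<in>E. v \<in> ends e}" using C_props(1) by blast
  moreover have "finite {c\<in>C. v \<in> ends c}" using C_props(2) by simp
  ultimately have "card {e\<in>E - C. v \<in> ends e} = card {e\<in>E. v \<in> ends e} - card {c\<in>C. v \<in> ends c}"
    by (simp add: card_Diff_subset)
  then show ?thesis using deg3[OF v] by (simp add: deg_def)
qed

lemma mkNone: "mk_ends E ends C K None = {aend c1, bend c2}"
proof -
  have "\<And>v. v \<in> K \<Longrightarrow> deg (E - C) ends v = 2 \<longleftrightarrow> v = aend c1 \<or> v = bend c2"
  proof -
    fix v assume v: "v \<in> K"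
    then have "v \<in> V" using KV by blast
    then show "deg (E - C) ends v = 2 \<longleftrightarrow> v = aend c1 \<or> v = bend c2"
      using degEC cntC_K[OF v] by simp
  qed
  then show ?thesis using p1K p2K by (auto simp: mk_ends_def)
qed

lemma q1deg: "deg (E - C) ends (bend c1) = 2"
  using degEC[OF bend_V[OF c1E]] cntC_Y[OF q1K] by simp

lemma deg_split: "F \<subseteq> E \<Longrightarrow> deg F ends v = card {e\<in>F-C. v \<in> ends e} + card {e\<in>F\<inter>C. v \<in> ends e}"
proof -
  assume F: "F \<subseteq> E"
  have fF: "finite F" using F finE finite_subset by blast
  have "{e\<in>F. v \<in> ends e} = {e\<in>F-C. v \<in> ends e} \<union> {e\<in>F\<inter>C. v \<in> ends e}" by blast
  moreover have "{e\<in>F-C. v \<in> ends e} \<inter> {e\<in>F\<inter>C. v \<in> ends e} = {}" by blast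
  ultimately show ?thesis using fF by (simp add: deg_def card_Un_disjoint)
qed

lemma degC_K: assumes v: "v \<in> K" and cc: "c1 \<in> F \<longleftrightarrow> c2 \<in> F"
  shows "card {e\<in>F\<inter>C. v \<in> ends e} = (if c1 \<in> F \<and> (v = aend c1 \<or> v = bend c2) then 1 else 0)"
proof (cases "c1 \<in> F")
  case True
  then have "F \<inter> C = C" using cc Cc by blast
  then show ?thesis using cntC_K[OF v] True by simp
next
  case False
  then have "F \<inter> C = {}" using cc Cc by blast
  then show ?thesis using False by simp
qed

lemma card_opt: "finite T \<Longrightarrow> N \<subseteq> {None} \<Longrightarrow> card (Some ` T \<union> N) = card T + card N"
proof -
  assume T: "finite T" and N: "N \<subseteq> {None}"
  have "Some ` T \<inter> N = {}" using N by blast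
  moreover have "finite N" using N finite_subset by blast
  ultimately have "card (Some ` T \<union> N) = card (Some ` T) + card N" using T by (simp add: card_Un_disjoint)
  then show ?thesis by (simp add: card_image)
qed

lemma transfer:
  assumes F: "F \<subseteq> E" and v: "v \<in> K" and cc: "c1 \<in> F \<longleftrightarrow> c2 \<in> F"
  shows "deg (Some ` {e\<in>F-C. ends e \<subseteq> K} \<union> (if c1 \<in> F then {None} else {})) (mk_ends E ends C K) v
       = deg F ends v"
proof -
  define N :: "'e option set" where "N = (if c1 \<in> F then {None} else {})"
  have fF: "finite F" using F finE finite_subset by blast
  have eqS: "{e\<in>{e\<in>F-C. ends e \<subseteq> K}. v \<in> ends e} = {e\<in>F-C. v \<in> ends e}"
  proof (rule Collect_cong)
    fix e show "(e\<in>{e\<in>F-C. ends e \<subseteq> K} \<and> v \<in> ends e) \<longleftrightarrow> (e\<in>F-C \<and> v \<in> ends e)"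
    proof
      assume h: "e\<in>F-C \<and> v \<in> ends e"
      then have e: "e \<in> E" "e \<notin> C" using F by auto
      have "aend e \<in> K \<or> bend e \<in> K" using h v mem_ends[OF e(1), of v] by auto
      then have "aend e \<in> K \<and> bend e \<in> K" using edge_in[OF e] by blast
      then have "ends e \<subseteq> K" using ab_ends(3)[OF e(1)] by simp
      then show "e\<in>{e\<in>F-C. ends e \<subseteq> K} \<and> v \<in> ends e" using h by blast
    qed simp
  qed
  have "{x\<in>Some ` {e\<in>F-C. ends e \<subseteq> K} \<union> N. v \<in> mk_ends E ends C K x}
      = Some ` {e\<in>{e\<in>F-C. ends e \<subseteq> K}. v \<in> ends e} \<union> {x\<in>N. v \<in> {aend c1, bend c2}}"
    using mkNone unfolding N_def by (auto simp: mk_ends_def)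
  also have "\<dots> = Some ` {e\<in>F-C. v \<in> ends e} \<union> {x\<in>N. v \<in> {aend c1, bend c2}}" using eqS by simp
  finally have "deg (Some ` {e\<in>F-C. ends e \<subseteq> K} \<union> N) (mk_ends E ends C K) v
      = card {e\<in>F-C. v \<in> ends e} + card {x\<in>N. v \<in> {aend c1, bend c2}}"
    unfolding deg_def by (rule ssubst) (rule card_opt, use fF in simp, auto simp: N_def)
  also have "card {x\<in>N. v \<in> {aend c1, bend c2}} = card {e\<in>F\<inter>C. v \<in> ends e}"
    using degC_K[OF v cc] by (simp add: N_def)
  also have "card {e\<in>F-C. v \<in> ends e} + card {e\<in>F\<inter>C. v \<in> ends e} = deg F ends v"
    using deg_split[OF F] by simp
  finally show ?thesis by (simp add: N_def)
qed


lemma cnt_aend: assumes S: "S \<subseteq> A" shows "card {e\<in>E. aend e \<in> S} = 3 * card S"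
proof -
  have fS: "finite S" using S finA finite_subset by blast
  have "(\<Sum>v\<in>A\<inter>S. deg E ends v) = (\<Sum>e\<in>E. if aend e \<in> S then 1 else 0)" by (rule sum_deg_A) simp
  moreover have "(\<Sum>v\<in>A\<inter>S. deg E ends v) = (\<Sum>v\<in>S. 3)"
  proof -
    have "A \<inter> S = S" using S by blast
    moreover have "\<forall>v\<in>S. deg E ends v = 3" using deg3 S VAB by blast
    ultimately show ?thesis by simp
  qed
  moreover have "(\<Sum>e\<in>E. if aend e \<in> S then 1 else 0) = card {e\<in>E. aend e \<in> S}"
    using card_filter_sum[OF finE, of "\<lambda>e. aend e \<in> S"] by simp
  ultimately show ?thesis by simp
qed

lemma ends_meet: assumes "S \<subseteq> A" "e \<in> E" shows "ends e \<inter> S \<noteq> {} \<longleftrightarrow> aend e \<in> S"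
proof -
  have "ends e \<inter> S = {aend e} \<inter> S" using ab_ends(1)[OF assms(2)] assms(1) by blast
  then show ?thesis by auto
qed

lemma PMb: "\<exists>M \<subseteq> E - C. (\<forall>e\<in>M. ends e \<subseteq> V - K) \<and> (\<forall>v\<in>V-K. deg M ends v = 1)"
proof -
  define E' where "E' = {e\<in>E-C. ends e \<subseteq> V - K}"
  have fE': "finite E'" using finE by (simp add: E'_def)
  have ed: "\<forall>e\<in>E'. \<exists>u\<in>A-K. \<exists>w\<in>B-K. ends e = {u,w}"
  proof
    fix e assume e: "e \<in> E'"
    then have eE: "e \<in> E" and sub: "ends e \<subseteq> V - K" by (auto simp: E'_def)
    have "aend e \<in> A - K" using ab_ends(3,4)[OF eE] sub by blast
    moreover have "bend e \<in> B - K" using ab_ends(3,5)[OF eE] sub by blast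
    ultimately show "\<exists>u\<in>A-K. \<exists>w\<in>B-K. ends e = {u,w}" using ab_ends(3)[OF eE] by blast
  qed
  have dg: "\<forall>w\<in>B-K. deg E' ends w \<le> 3"
  proof
    fix w assume w: "w \<in> B - K"
    have "deg E' ends w \<le> deg E ends w" unfolding deg_def by (rule card_mono) (use finE E'_def in auto)
    then show "deg E' ends w \<le> 3" using deg3 w VAB by simp
  qed
  have hs: "\<forall>S\<subseteq>A-K. 3 * card S \<le> card {e\<in>E'. ends e \<inter> S \<noteq> {}} + 2"
  proof (intro allI impI)
    fix S assume S: "S \<subseteq> A - K"
    then have SA: "S \<subseteq> A" by blast
    have "{e\<in>E. aend e \<in> S} \<subseteq> {e\<in>E'. ends e \<inter> S \<noteq> {}} \<union> C"
    proof
      fix e assume e: "e \<in> {e\<in>E. aend e \<in> S}"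
      then have eE: "e \<in> E" and aS: "aend e \<in> S" by auto
      show "e \<in> {e\<in>E'. ends e \<inter> S \<noteq> {}} \<union> C"
      proof (cases "e \<in> C")
        case False
        have "aend e \<notin> K" using aS S by blast
        then have "bend e \<notin> K" using edge_in[OF eE False] by blast
        moreover have "aend e \<in> V" "bend e \<in> V" using aend_V[OF eE] bend_V[OF eE] by auto
        ultimately have "ends e \<subseteq> V - K" unfolding ab_ends(3)[OF eE] using \<open>aend e \<notin> K\<close> by simp
        then have "e \<in> E'" using eE False by (simp add: E'_def)
        moreover have "ends e \<inter> S \<noteq> {}" using ends_meet[OF SA eE] aS by simp
        ultimately show ?thesis by blast
      qed simp
    qed
    then have "card {e\<in>E. aend e \<in> S} \<le> card ({e\<in>E'. ends e \<inter> S \<noteq> {}} \<union> C)"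
      by (rule card_mono[rotated]) (use fE' C_props(2) in simp)
    also have "\<dots> \<le> card {e\<in>E'. ends e \<inter> S \<noteq> {}} + card C" by (rule card_Un_le)
    finally show "3 * card S \<le> card {e\<in>E'. ends e \<inter> S \<noteq> {}} + 2"
      using cnt_aend[OF SA] C_props(3) by simp
  qed
  have disj: "(A - K) \<inter> (B - K) = {}" using AB by blast
  obtain M where M: "M \<subseteq> E'" "\<forall>v\<in>(A-K)\<union>(B-K). deg M ends v = 1"
    using hall_pm[of "A-K" "B-K" E' ends] finA finB fE' disj ed dg cAB_Y hs by auto
  have "(A-K)\<union>(B-K) = V - K" using VAB by blast
  then show ?thesis using M by (intro exI[of _ M]) (auto simp: E'_def)
qed


lemma PMa: "\<exists>M \<subseteq> E - C. (\<forall>e\<in>M. ends e \<subseteq> V - K) \<and>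
   (\<forall>v\<in>V-K. deg M ends v = (if v = bend c1 \<or> v = aend c2 then 0 else 1))"
proof -
  define q1 where "q1 = bend c1"
  define q2 where "q2 = aend c2"
  have q1B: "q1 \<in> B" and q2A: "q2 \<in> A" using ab_ends(5)[OF c1E] ab_ends(4)[OF c2E] by (auto simp: q1_def q2_def)
  have q1Y: "q1 \<in> V - K" and q2Y: "q2 \<in> V - K" using q1K q2K bend_V[OF c1E] aend_V[OF c2E]
    by (auto simp: q1_def q2_def)
  define L where "L = A - K - {q2}"
  define R where "R = B - K - {q1}"
  define E' where "E' = {e\<in>E-C. ends e \<subseteq> V - K - {q1,q2}}"
  have fE': "finite E'" using finE by (simp add: E'_def)
  have fL: "finite L" and fR: "finite R" using finA finB by (auto simp: L_def R_def)
  have ed: "\<forall>e\<in>E'. \<exists>u\<in>L. \<exists>w\<in>R. ends e = {u,w}"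
  proof
    fix e assume e: "e \<in> E'"
    then have eE: "e \<in> E" and sub: "ends e \<subseteq> V - K - {q1,q2}" by (auto simp: E'_def)
    have "aend e \<in> L" using ab_ends(3,4)[OF eE] sub unfolding L_def by blast
    moreover have "bend e \<in> R" using ab_ends(3,5)[OF eE] sub unfolding R_def by blast
    ultimately show "\<exists>u\<in>L. \<exists>w\<in>R. ends e = {u,w}" using ab_ends(3)[OF eE] by blast
  qed
  have dg: "\<forall>w\<in>R. deg E' ends w \<le> 3"
  proof
    fix w assume w: "w \<in> R"
    have "deg E' ends w \<le> deg E ends w" unfolding deg_def by (rule card_mono) (use finE E'_def in auto)
    then show "deg E' ends w \<le> 3" using deg3 w VAB by (simp add: R_def)
  qed
  have cLR: "card L = card R"
  proof -
    have "card L = card (A - K) - 1" unfolding L_def using q2A q2Y finA by (simp add: card_Diff_singleton)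
    moreover have "card R = card (B - K) - 1" unfolding R_def using q1B q1Y finB by (simp add: card_Diff_singleton)
    ultimately show ?thesis using cAB_Y by simp
  qed
  have hs: "\<forall>S\<subseteq>L. 3 * card S \<le> card {e\<in>E'. ends e \<inter> S \<noteq> {}} + 2"
  proof (intro allI impI)
    fix S assume S: "S \<subseteq> L"
    then have SA: "S \<subseteq> A" by (auto simp: L_def)
    have "{e\<in>E. aend e \<in> S} \<subseteq> {e\<in>E'. ends e \<inter> S \<noteq> {}} \<union> {e\<in>E-C. q1 \<in> ends e}"
    proof
      fix e assume e: "e \<in> {e\<in>E. aend e \<in> S}"
      then have eE: "e \<in> E" and aS: "aend e \<in> S" by auto
      have aK: "aend e \<notin> K" and aq2: "aend e \<noteq> q2" using aS S by (auto simp: L_def)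
      have nC: "e \<notin> C"
      proof
        assume "e \<in> C"
        then have "e = c1 \<or> e = c2" using Cc by blast
        then show False using aK aq2 p1K by (auto simp: q2_def)
      qed
      have bK: "bend e \<notin> K" using edge_in[OF eE nC] aK by blast
      have aq1: "aend e \<noteq> q1" using ab_ends(4)[OF eE] q1B AB by blast
      have bq2: "bend e \<noteq> q2" using ab_ends(5)[OF eE] q2A AB by blast
      show "e \<in> {e\<in>E'. ends e \<inter> S \<noteq> {}} \<union> {e\<in>E-C. q1 \<in> ends e}"
      proof (cases "bend e = q1")
        case True
        then show ?thesis using eE nC ab_ends(3)[OF eE] by simp
      next
        case False
        have "ends e \<subseteq> V - K - {q1,q2}" unfolding ab_ends(3)[OF eE]
          using aK bK aq1 aq2 bq2 False aend_V[OF eE] bend_V[OF eE] by simp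
        then have "e \<in> E'" using eE nC by (simp add: E'_def)
        moreover have "ends e \<inter> S \<noteq> {}" using ends_meet[OF SA eE] aS by simp
        ultimately show ?thesis by blast
      qed
    qed
    then have "card {e\<in>E. aend e \<in> S} \<le> card ({e\<in>E'. ends e \<inter> S \<noteq> {}} \<union> {e\<in>E-C. q1 \<in> ends e})"
      by (rule card_mono[rotated]) (use fE' finE in simp)
    also have "\<dots> \<le> card {e\<in>E'. ends e \<inter> S \<noteq> {}} + card {e\<in>E-C. q1 \<in> ends e}" by (rule card_Un_le)
    also have "card {e\<in>E-C. q1 \<in> ends e} = 2" using q1deg by (simp add: deg_def q1_def)
    finally show "3 * card S \<le> card {e\<in>E'. ends e \<inter> S \<noteq> {}} + 2"
      using cnt_aend[OF SA] by simp
  qed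
  have disj: "L \<inter> R = {}" using AB by (auto simp: L_def R_def)
  obtain M where M: "M \<subseteq> E'" "\<forall>v\<in>L\<union>R. deg M ends v = 1"
    using hall_pm[OF fL fR fE' disj ed dg cLR hs] by blast
  have LR: "L \<union> R = V - K - {q1, q2}" using VAB q1B q2A AB by (auto simp: L_def R_def)
  show ?thesis
  proof (intro exI[of _ M] conjI ballI)
    show "M \<subseteq> E - C" using M(1) by (auto simp: E'_def)
    fix e assume "e \<in> M" then show "ends e \<subseteq> V - K" using M(1) by (auto simp: E'_def)
  next
    fix v assume v: "v \<in> V - K"
    show "deg M ends v = (if v = bend c1 \<or> v = aend c2 then 0 else 1)"
    proof (cases "v = q1 \<or> v = q2")
      case True
      have h: "{e\<in>M. v \<in> ends e} = {}" using M(1) True by (auto simp: E'_def)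
      have "deg M ends v = 0" unfolding deg_def h by simp
      then show ?thesis using True by (simp add: q1_def q2_def)
    next
      case False
      then have "v \<in> L \<union> R" using LR v by blast
      then show ?thesis using M(2) False by (simp add: q1_def q2_def)
    qed
  qed
qed


lemma g_c1: "((if aend c1 \<in> K then 1 else 0) - (if bend c1 \<in> K then 1 else 0) :: int) = 1"
  using p1K q1K by simp
lemma g_c2: "((if aend c2 \<in> K then 1 else 0) - (if bend c2 \<in> K then 1 else 0) :: int) = -1"
  using q2K p2K by simp

lemma fwd:
  assumes aA: "a \<in> A" and aK: "a \<in> K" and bB: "b \<in> B" and F: "ab_matching V E ends a b F"
  shows "b \<in> K \<and> lam_matchable K (mk_edges E ends C K) (mk_ends E ends C K) a b"
proof -
  have FE: "F \<subseteq> E" using F by (simp add: ab_matching_def)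
  have da: "deg F ends a = 3" using F by (simp add: ab_matching_def)
  have db: "deg F ends b = 3" using F by (simp add: ab_matching_def)
  have d1: "\<forall>v\<in>V-{a,b}. deg F ends v = 1" using F by (simp add: ab_matching_def)
  have fAK: "finite (A\<inter>K)" and fBK: "finite (B\<inter>K)" using finA finB by auto
  have sA: "(\<Sum>v\<in>A\<inter>K. deg F ends v) = card (A\<inter>K) + 2"
  proof -
    have "(\<Sum>v\<in>A\<inter>K. deg F ends v) = (\<Sum>v\<in>A\<inter>K. 1 + (if v = a then 2 else 0))"
    proof (rule sum.cong[OF refl])
      fix v assume v: "v \<in> A\<inter>K"
      show "deg F ends v = 1 + (if v = a then 2 else 0)"
      proof (cases "v = a")
        case True then show ?thesis using da by simp
      next
        case False
        have "v \<noteq> b" using v bB AB by blast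
        moreover have "v \<in> V" using v VAB by blast
        ultimately show ?thesis using d1 False by simp
      qed
    qed
    also have "\<dots> = card (A\<inter>K) + 2" unfolding sum.distrib using aA aK fAK by (simp add: sum.delta)
    finally show ?thesis .
  qed
  have sB: "(\<Sum>v\<in>B\<inter>K. deg F ends v) = card (B\<inter>K) + (if b \<in> K then 2 else 0)"
  proof -
    have "(\<Sum>v\<in>B\<inter>K. deg F ends v) = (\<Sum>v\<in>B\<inter>K. 1 + (if v = b then 2 else 0))"
    proof (rule sum.cong[OF refl])
      fix v assume v: "v \<in> B\<inter>K"
      show "deg F ends v = 1 + (if v = b then 2 else 0)"
      proof (cases "v = b")
        case True then show ?thesis using db by simp
      next
        case False
        have "v \<noteq> a" using v aA AB by blast
        moreover have "v \<in> V" using v VAB by blast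
        ultimately show ?thesis using d1 False by simp
      qed
    qed
    also have "\<dots> = card (B\<inter>K) + (if b \<in> K then 2 else 0)" unfolding sum.distrib using bB fBK by (simp add: sum.delta)
    finally show ?thesis .
  qed
  define g :: "'e \<Rightarrow> int" where "g e = (if aend e \<in> K then 1 else 0) - (if bend e \<in> K then 1 else 0)" for e
  have "int (\<Sum>v\<in>A\<inter>K. deg F ends v) - int (\<Sum>v\<in>B\<inter>K. deg F ends v) = (\<Sum>e\<in>F \<inter> cut E ends K. g e)"
    unfolding g_def by (rule parity[OF FE])
  also have "\<dots> = (\<Sum>e\<in>C \<inter> F. g e)" using cutK by (simp add: Int_commute)
  also have "\<dots> = (\<Sum>e\<in>C. if e \<in> F then g e else 0)" by (rule sum.inter_restrict[OF C_props(2)])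
  also have "\<dots> = (if c1 \<in> F then 1 else 0) + (if c2 \<in> F then -1 else 0)"
    using Cc c12 g_c1 g_c2 by (simp add: g_def)
  finally have eq: "int (card (A\<inter>K) + 2) - int (card (B\<inter>K) + (if b \<in> K then 2 else 0))
      = (if c1 \<in> F then 1 else 0) + (if c2 \<in> F then -1 else 0)" using sA sB by simp
  have bK: "b \<in> K"
  proof (rule ccontr)
    assume "b \<notin> K"
    then have "(2::int) = (if c1 \<in> F then 1 else 0) + (if c2 \<in> F then -1 else 0)" using eq cAB_K by simp
    then show False by (simp split: if_splits)
  qed
  have "(0::int) = (if c1 \<in> F then 1 else 0) + (if c2 \<in> F then -1 else 0)" using eq cAB_K bK by simp
  then have cc: "c1 \<in> F \<longleftrightarrow> c2 \<in> F" by (simp split: if_splits)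
  define F' where "F' = Some ` {e\<in>F-C. ends e \<subseteq> K} \<union> (if c1 \<in> F then {None} else {})"
  have tr: "\<And>v. v \<in> K \<Longrightarrow> deg F' (mk_ends E ends C K) v = deg F ends v"
    unfolding F'_def by (rule transfer[OF FE _ cc])
  have "ab_matching K (mk_edges E ends C K) (mk_ends E ends C K) a b F'"
    unfolding ab_matching_def
  proof (intro conjI ballI)
    show "F' \<subseteq> mk_edges E ends C K" using FE by (auto simp: F'_def mk_edges_def)
    show "deg F' (mk_ends E ends C K) a = 3" using tr[OF aK] da by simp
    show "deg F' (mk_ends E ends C K) b = 3" using tr[OF bK] db by simp
    fix v assume v: "v \<in> K - {a, b}"
    then have "v \<in> V - {a,b}" using KV by blast
    then show "deg F' (mk_ends E ends C K) v = 1" using tr d1 v by simp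
  qed
  then show ?thesis using bK by (auto simp: lam_matchable_def)
qed


lemma bwd:
  assumes aA: "a \<in> A" and aK: "a \<in> K" and bB: "b \<in> B" and bK: "b \<in> K"
    and F': "ab_matching K (mk_edges E ends C K) (mk_ends E ends C K) a b F'"
  shows "lam_matchable V E ends a b"
proof -
  have F'sub: "F' \<subseteq> mk_edges E ends C K" using F' by (simp add: ab_matching_def)
  have da: "deg F' (mk_ends E ends C K) a = 3" using F' by (simp add: ab_matching_def)
  have db: "deg F' (mk_ends E ends C K) b = 3" using F' by (simp add: ab_matching_def)
  have d1: "\<forall>v\<in>K-{a,b}. deg F' (mk_ends E ends C K) v = 1" using F' by (simp add: ab_matching_def)
  define F0 where "F0 = {e. Some e \<in> F'}"
  have F0sub: "F0 \<subseteq> {e\<in>E-C. ends e \<subseteq> K}" using F'sub by (auto simp: F0_def mk_edges_def)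
  define nn where "nn = (None \<in> F')"
  obtain M where M: "M \<subseteq> E - C" "\<forall>e\<in>M. ends e \<subseteq> V - K"
    "\<forall>v\<in>V-K. deg M ends v = (if nn \<and> (v = bend c1 \<or> v = aend c2) then 0 else 1)"
  proof (cases nn)
    case True
    obtain M where h: "M \<subseteq> E - C" "\<forall>e\<in>M. ends e \<subseteq> V - K"
      "\<forall>v\<in>V-K. deg M ends v = (if v = bend c1 \<or> v = aend c2 then 0 else 1)" using PMa by blast
    show ?thesis by (rule that[OF h(1) h(2)]) (use h(3) True in simp)
  next
    case False
    obtain M where h: "M \<subseteq> E - C" "\<forall>e\<in>M. ends e \<subseteq> V - K"
      "\<forall>v\<in>V-K. deg M ends v = 1" using PMb by blast
    show ?thesis by (rule that[OF h(1) h(2)]) (use h(3) False in simp)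
  qed
  define F where "F = F0 \<union> M \<union> (if nn then C else {})"
  have FE: "F \<subseteq> E" using F0sub M(1) C_props(1) by (auto simp: F_def)
  have c1F: "c1 \<in> F \<longleftrightarrow> nn" using F0sub M(1) Cc by (auto simp: F_def)
  have c2F: "c2 \<in> F \<longleftrightarrow> nn" using F0sub M(1) Cc by (auto simp: F_def)
  have cc: "c1 \<in> F \<longleftrightarrow> c2 \<in> F" using c1F c2F by simp
  have F0eq: "{e\<in>F-C. ends e \<subseteq> K} = F0"
  proof
    show "F0 \<subseteq> {e\<in>F-C. ends e \<subseteq> K}" using F0sub by (auto simp: F_def)
    show "{e\<in>F-C. ends e \<subseteq> K} \<subseteq> F0"
    proof
      fix e assume e: "e \<in> {e\<in>F-C. ends e \<subseteq> K}"
      show "e \<in> F0"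
      proof (rule ccontr)
        assume "e \<notin> F0"
        then have "e \<in> M" using e by (auto simp: F_def split: if_splits)
        then have eE: "e \<in> E" and sub: "ends e \<subseteq> V - K" using M(1,2) by auto
        have "aend e \<in> ends e" using ab_ends(3)[OF eE] by simp
        then show False using sub e by blast
      qed
    qed
  qed
  have F'eq: "F' = Some ` F0 \<union> (if c1 \<in> F then {None} else {})"
  proof (rule set_eqI)
    fix x show "x \<in> F' \<longleftrightarrow> x \<in> Some ` F0 \<union> (if c1 \<in> F then {None} else {})"
      using c1F by (cases x) (auto simp: F0_def nn_def)
  qed
  have tr: "\<And>v. v \<in> K \<Longrightarrow> deg F' (mk_ends E ends C K) v = deg F ends v"
    unfolding F'eq F0eq[symmetric] by (rule transfer[OF FE _ cc])
  have Yside: "\<And>v. v \<in> V - K \<Longrightarrow> deg F ends v = 1"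
  proof -
    fix v assume v: "v \<in> V - K"
    define CC where "CC = (if nn then C else {})"
    have "{e\<in>F. v \<in> ends e} = {e\<in>M. v \<in> ends e} \<union> {e\<in>CC. v \<in> ends e}"
      using F0sub v by (auto simp: F_def CC_def)
    moreover have "{e\<in>M. v \<in> ends e} \<inter> {e\<in>CC. v \<in> ends e} = {}" using M(1) by (auto simp: CC_def)
    moreover have "finite M" using M(1) finE finite_subset by blast
    moreover have "finite CC" using C_props(2) by (simp add: CC_def)
    ultimately have "deg F ends v = deg M ends v + card {e\<in>CC. v \<in> ends e}"
      by (simp add: deg_def card_Un_disjoint)
    moreover have "card {e\<in>CC. v \<in> ends e} = (if nn then (if v = bend c1 \<or> v = aend c2 then 1 else 0) else 0)"
      using cntC_Y v by (simp add: CC_def)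
    ultimately show "deg F ends v = 1" using M(3) v by simp
  qed
  have "ab_matching V E ends a b F"
    unfolding ab_matching_def
  proof (intro conjI ballI)
    show "F \<subseteq> E" by (rule FE)
    show "deg F ends a = 3" using tr[OF aK] da by simp
    show "deg F ends b = 3" using tr[OF bK] db by simp
    fix v assume v: "v \<in> V - {a, b}"
    show "deg F ends v = 1"
    proof (cases "v \<in> K")
      case True
      then show ?thesis using tr[OF True] d1 v by simp
    next
      case False
      then show ?thesis using Yside v by blast
    qed
  qed
  then show ?thesis by (auto simp: lam_matchable_def)
qed

lemma S1: "\<forall>a\<in>A\<inter>K. \<forall>b\<in>B. lam_matchable V E ends a b \<longleftrightarrow>
    (b \<in> K \<and> lam_matchable K (mk_edges E ends C K) (mk_ends E ends C K) a b)"
proof (intro ballI iffI)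
  fix a b assume a: "a \<in> A\<inter>K" and b: "b \<in> B"
  {
    assume "lam_matchable V E ends a b"
    then obtain F where "ab_matching V E ends a b F" by (auto simp: lam_matchable_def)
    then show "b \<in> K \<and> lam_matchable K (mk_edges E ends C K) (mk_ends E ends C K) a b"
      using fwd a b by blast
  }
  {
    assume h: "b \<in> K \<and> lam_matchable K (mk_edges E ends C K) (mk_ends E ends C K) a b"
    then obtain F' where "ab_matching K (mk_edges E ends C K) (mk_ends E ends C K) a b F'"
      by (auto simp: lam_matchable_def)
    then show "lam_matchable V E ends a b" using bwd a b h by blast
  }
qed

end

context cg
begin

lemma comp_eq:
  assumes "z \<in> comp_of V E ends C x"
  shows "comp_of V E ends C z = comp_of V E ends C x"
proof -
  have xz: "(x, z) \<in> (adj_rel (E - C) ends)\<^sup>*" using assms by (simp add: comp_of_def)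
  have zx: "(z, x) \<in> (adj_rel (E - C) ends)\<^sup>*" using adj_sym[OF xz] .
  show ?thesis
  proof (rule set_eqI)
    fix w
    show "w \<in> comp_of V E ends C z \<longleftrightarrow> w \<in> comp_of V E ends C x"
    proof
      assume "w \<in> comp_of V E ends C z"
      then have "(z, w) \<in> (adj_rel (E - C) ends)\<^sup>*" "w \<in> V" by (auto simp: comp_of_def)
      then show "w \<in> comp_of V E ends C x" using rtrancl_trans[OF xz] by (simp add: comp_of_def)
    next
      assume "w \<in> comp_of V E ends C x"
      then have "(x, w) \<in> (adj_rel (E - C) ends)\<^sup>*" "w \<in> V" by (auto simp: comp_of_def)
      then show "w \<in> comp_of V E ends C z" using rtrancl_trans[OF zx] by (simp add: comp_of_def)
    qed
  qed
qed

lemma side_of_comp: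
  assumes v: "v \<in> V"
  shows "\<exists>c1 c2. side V E ends A B C (comp_of V E ends C v) c1 c2"
proof -
  define K where "K = comp_of V E ends C v"
  have KV: "K \<subseteq> V" and cK: "cut E ends K = C" using comp_props[OF v] K_def by auto
  obtain c1 c2 where o: "C = {c1,c2}" "c1\<noteq>c2" "aend c1 \<in> K" "bend c1 \<notin> K" "aend c2 \<notin> K" "bend c2 \<in> K"
    using orient(1)[OF cK] by blast
  have "side V E ends A B C K c1 c2"
    by (intro side.intro side_axioms.intro) (fact cg_axioms, fact KV, fact cK, fact o(1), fact o(2),
        fact o(3), fact o(4), fact o(5), fact o(6))
  then show ?thesis unfolding K_def by blast
qed

lemma part1:
  assumes a: "a \<in> A" and b: "b \<in> B"
  shows "lam_matchable V E ends a b \<longleftrightarrow>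
            (b \<in> comp_of V E ends C a \<and>
             lam_matchable (comp_of V E ends C a) (mk_edges E ends C (comp_of V E ends C a))
                (mk_ends E ends C (comp_of V E ends C a)) a b)"
proof -
  have aV: "a \<in> V" using a VAB by blast
  obtain c1 c2 where s: "side V E ends A B C (comp_of V E ends C a) c1 c2" using side_of_comp[OF aV] by blast
  have aK: "a \<in> comp_of V E ends C a" using comp_props(2)[OF aV] .
  show ?thesis using side.S1[OF s] a aK b by blast
qed

lemma part2:
  assumes x: "x \<in> V" and y: "y \<in> V" and ne: "comp_of V E ends C x \<noteq> comp_of V E ends C y"
  shows "rho V E ends A B =
      rho (comp_of V E ends C x) (mk_edges E ends C (comp_of V E ends C x)) (mk_ends E ends C (comp_of V E ends C x)) (A \<inter> comp_of V E ends C x) (B \<inter> comp_of V E ends C x)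
    + rho (comp_of V E ends C y) (mk_edges E ends C (comp_of V E ends C y)) (mk_ends E ends C (comp_of V E ends C y)) (A \<inter> comp_of V E ends C y) (B \<inter> comp_of V E ends C y)"
proof -
  define K1 where "K1 = comp_of V E ends C x"
  define K2 where "K2 = comp_of V E ends C y"
  have K1V: "K1 \<subseteq> V" and xK1: "x \<in> K1" and cK1: "cut E ends K1 = C" using comp_props[OF x] K1_def by auto
  have K2V: "K2 \<subseteq> V" and yK2: "y \<in> K2" and cK2: "cut E ends K2 = C" using comp_props[OF y] K2_def by auto
  have dis: "K1 \<inter> K2 = {}"
  proof (rule ccontr)
    assume "K1 \<inter> K2 \<noteq> {}"
    then obtain z where z: "z \<in> K1" "z \<in> K2" by blast
    have "comp_of V E ends C z = K1" using comp_eq z(1) K1_def by simp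
    moreover have "comp_of V E ends C z = K2" using comp_eq z(2) K2_def by simp
    ultimately show False using ne K1_def K2_def by simp
  qed
  have K2eq: "K2 = V - K1"
  proof (rule ccontr)
    assume "K2 \<noteq> V - K1"
    then have Zne: "V - K1 - K2 \<noteq> {}" using K2V dis by blast
    have "V - (V - K1 - K2) \<noteq> {}" using xK1 K1V by blast
    then have "cut E ends (V - K1 - K2) \<noteq> {}" using connected_cut[of "V - K1 - K2"] Zne by blast
    then obtain e where e: "e \<in> cut E ends (V - K1 - K2)" by blast
    then have eE: "e \<in> E" using cut_sub by blast
    have iZ: "aend e \<in> V - K1 - K2 \<longleftrightarrow> bend e \<notin> V - K1 - K2" using cut_iff[OF eE] e by simp
    have aV: "aend e \<in> V" and bV: "bend e \<in> V" using aend_V[OF eE] bend_V[OF eE] by auto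
    show False
    proof (cases "e \<in> C")
      case True
      have i1: "aend e \<in> K1 \<longleftrightarrow> bend e \<notin> K1" using cut_iff[OF eE, of K1] True cK1 by simp
      have i2: "aend e \<in> K2 \<longleftrightarrow> bend e \<notin> K2" using cut_iff[OF eE, of K2] True cK2 by simp
      show False using i1 i2 iZ dis aV bV by blast
    next
      case False
      have i1: "aend e \<in> K1 \<longleftrightarrow> bend e \<in> K1" using cut_iff[OF eE, of K1] False cK1 by simp
      have i2: "aend e \<in> K2 \<longleftrightarrow> bend e \<in> K2" using cut_iff[OF eE, of K2] False cK2 by simp
      show False using i1 i2 iZ aV bV by blast
    qed
  qed
  obtain c1 c2 where s1: "side V E ends A B C K1 c1 c2" using side_of_comp[OF x] K1_def by blast
  obtain d1 d2 where s2: "side V E ends A B C K2 d1 d2" using side_of_comp[OF y] K2_def by blast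
  define P where "P = {(a, b). a \<in> A \<and> b \<in> B \<and> lam_matchable V E ends a b}"
  define P1 where "P1 = {(a, b). a \<in> A \<inter> K1 \<and> b \<in> B \<inter> K1 \<and> lam_matchable K1 (mk_edges E ends C K1) (mk_ends E ends C K1) a b}"
  define P2 where "P2 = {(a, b). a \<in> A \<inter> K2 \<and> b \<in> B \<inter> K2 \<and> lam_matchable K2 (mk_edges E ends C K2) (mk_ends E ends C K2) a b}"
  note S11 = side.S1[OF s1]
  note S12 = side.S1[OF s2]
  have PU: "P = P1 \<union> P2"
  proof (rule set_eqI)
    fix p :: "'v \<times> 'v"
    obtain a b where p: "p = (a, b)" by (cases p)
    show "p \<in> P \<longleftrightarrow> p \<in> P1 \<union> P2"
    proof (cases "a \<in> A")
      case True
      then have "a \<in> V" using VAB by blast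
      then have "a \<in> K1 \<or> a \<in> K2" using K2eq by blast
      then show ?thesis
      proof
        assume aK: "a \<in> K1"
        then have "a \<notin> K2" using dis by blast
        then show ?thesis using S11 True aK unfolding p P_def P1_def P2_def by blast
      next
        assume aK: "a \<in> K2"
        then have "a \<notin> K1" using dis by blast
        then show ?thesis using S12 True aK unfolding p P_def P1_def P2_def by blast
      qed
    next
      case False
      then show ?thesis unfolding p P_def P1_def P2_def by blast
    qed
  qed
  have fP1: "finite P1" by (rule finite_subset[of _ "A \<times> B"]) (auto simp: P1_def finA finB)
  have fP2: "finite P2" by (rule finite_subset[of _ "A \<times> B"]) (auto simp: P2_def finA finB)
  have dP: "P1 \<inter> P2 = {}" using dis by (auto simp: P1_def P2_def)
  have "rho V E ends A B = card P" by (simp add: rho_def P_def)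
  also have "\<dots> = card P1 + card P2" using PU card_Un_disjoint[OF fP1 fP2 dP] by simp
  finally show ?thesis by (simp add: rho_def P1_def P2_def K1_def K2_def)
qed

end

theorem lemma2p3:
  fixes V :: "'v set" and E :: "'e set" and ends :: "'e \<Rightarrow> 'v set"
    and A B :: "'v set" and C :: "'e set"
  assumes "mgraph V E ends" and "connected_mg V E ends" and "cubic V E ends"
    and "bipartite_AB V E ends A B"
    and "two_cut V E ends C"
  shows "(\<forall>a\<in>A. \<forall>b\<in>B. lam_matchable V E ends a b \<longleftrightarrow>
            (b \<in> comp_of V E ends C a \<and>
             lam_matchable (comp_of V E ends C a) (mk_edges E ends C (comp_of V E ends C a))
                (mk_ends E ends C (comp_of V E ends C a)) a b))
       \<and> (\<forall>x\<in>V. \<forall>y\<in>V. comp_of V E ends C x \<noteq> comp_of V E ends C y \<longrightarrow>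
            (let K1 = comp_of V E ends C x; K2 = comp_of V E ends C y in
             rho V E ends A B =
               rho K1 (mk_edges E ends C K1) (mk_ends E ends C K1) (A \<inter> K1) (B \<inter> K1)
             + rho K2 (mk_edges E ends C K2) (mk_ends E ends C K2) (A \<inter> K2) (B \<inter> K2)))"
proof -
  have c: "cg V E ends A B C" using assms by (simp add: cg_def)
  show ?thesis
    using cg.part1[OF c] cg.part2[OF c] unfolding Let_def by blast
qed

end
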